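(* In the standard LLP setup, suppose $\overline{K}=\overline{K_{mc}}$ and there is no starting error in $L(G,\gamma^N_{cons})$ (i.e. $f^N_{cons}(\epsilon)\neq\emptyset$). If $N_{mcmc}$ is defined and $N\ge N_{mcmc}+1$, then $L(G,\gamma^N_{cons})=\overline{K^\uparrow}$.
   Context: Standard LLP setup. $\Sigma=\Sigma_c\,\dot\cup\,\Sigma_{uc}$ is a finite alphabet partitioned into controllable and uncontrollable events. The plant $G$ has generated language $L(G)$ and marked language $L_m(G)$ with $L(G)=\overline{L_m(G)}$ ($\overline{M}$ = set of prefixes of strings in $M$). The legal language $K\subseteq L_m(G)$ satisfies $K=\overline{K}\cap L_m(G)$ ($K$ need not be prefix-closed). For a prefix-closed $L$, $M$ is controllable w.r.t. $L$ if $\overline{M}\Sigma_{uc}\cap L\subseteq\overline{M}$; $K^\uparrow$ is the supremal sublanguage of $K$ controllable w.r.t. $L(G)$. For a language $L$ and $s\in\Sigma^*$: $L/s=\{t: st\in L\}$; $L|_N=\{t\in L:|t|\le N\}$; $\Sigma_{L(G)}(s)=\{\sigma\in\Sigma: s\sigma\in L(G)\}$. $M^{\uparrow/s|_N}$ is the supremal sublanguage of $M$ controllable w.r.t. $L(G)/s|_N$. Conservative attitude: $f^N_{cons}(s)=[K/s|_{N-1}]^{\uparrow/s|_N}$; control policy $\gamma^N_{cons}(s)=(\overline{f^N_{cons}(s)}\cap\Sigma)\cup(\Sigma_{uc}\cap\Sigma_{L(G)}(s))$. Closed-loop language $L(G,\gamma)$: $\epsilon\in L(G,\gamma)$, and $s\sigma\in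 L(G,\gamma)$ iff $s\in L(G,\gamma)$, $s\sigma\in L(G)$, $\sigma\in\gamma(s)$. Define $L_c(G)=\{s\in L(G): s\sigma\notin L(G)\ \forall\sigma\in\Sigma_{uc}\}$ and $K_{mc}=K\cap L_c(G)$. Then $N_{mcmc}=\max\{|t|: \exists s\in K_{mc}\cup\{\epsilon\},\ st\in K_{mc}\text{ and } sv\notin K_{mc}\text{ for every nonempty proper prefix } v\text{ of } t\}$ if this maximum exists; otherwise undefined. *)

theory Defs
  imports Main
begin

text \<open>The finite alphabet Sigma is the finite type 'a; Euc is the set of
  uncontrollable events, the controllable ones being its complement.\<close>

definition pref :: "'a list set \<Rightarrow> 'a list set" where
  "pref M = {s. \<exists>t. s @ t \<in> M}"

definition controllable :: "'a set \<Rightarrow> 'a list set \<Rightarrow> 'a list set \<Rightarrow> bool" where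
  "controllable Euc L M \<longleftrightarrow>
     (\<forall>s \<sigma>. s \<in> pref M \<and> \<sigma> \<in> Euc \<and> s @ [\<sigma>] \<in> L \<longrightarrow> s @ [\<sigma>] \<in> pref M)"

definition supcon :: "'a set \<Rightarrow> 'a list set \<Rightarrow> 'a list set \<Rightarrow> 'a list set" where
  "supcon Euc L M = \<Union>{M'. M' \<subseteq> M \<and> controllable Euc L M'}"

definition quot :: "'a list set \<Rightarrow> 'a list \<Rightarrow> 'a list set" where
  "quot L s = {t. s @ t \<in> L}"

definition trunc :: "'a list set \<Rightarrow> nat \<Rightarrow> 'a list set" where
  "trunc L N = {t \<in> L. length t \<le> N}"

text \<open>Conservative attitude; L is the generated language L(G).\<close>
definition f_cons :: "'a set \<Rightarrow> 'a list set \<Rightarrow> 'a list set \<Rightarrow> nat \<Rightarrow> 'a list \<Rightarrow> 'a list set" where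
  "f_cons Euc L K N s = supcon Euc (trunc (quot L s) N) (trunc (quot K s) (N - 1))"

definition gamma_cons :: "'a set \<Rightarrow> 'a list set \<Rightarrow> 'a list set \<Rightarrow> nat \<Rightarrow> 'a list \<Rightarrow> 'a set" where
  "gamma_cons Euc L K N s =
     {\<sigma>. [\<sigma>] \<in> pref (f_cons Euc L K N s)} \<union> {\<sigma> \<in> Euc. s @ [\<sigma>] \<in> L}"

inductive_set closed_loop :: "'a list set \<Rightarrow> ('a list \<Rightarrow> 'a set) \<Rightarrow> 'a list set"
  for L :: "'a list set" and \<gamma> :: "'a list \<Rightarrow> 'a set" where
  Nil: "[] \<in> closed_loop L \<gamma>"
| snoc: "s \<in> closed_loop L \<gamma> \<Longrightarrow> s @ [\<sigma>] \<in> L \<Longrightarrow> \<sigma> \<in> \<gamma> s \<Longrightarrow> s @ [\<sigma>] \<in> closed_loop L \<gamma>"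

definition Lc :: "'a set \<Rightarrow> 'a list set \<Rightarrow> 'a list set" where
  "Lc Euc L = {s \<in> L. \<forall>\<sigma> \<in> Euc. s @ [\<sigma>] \<notin> L}"

definition Kmc :: "'a set \<Rightarrow> 'a list set \<Rightarrow> 'a list set \<Rightarrow> 'a list set" where
  "Kmc Euc L K = K \<inter> Lc Euc L"

text \<open>The set of lengths over which N_mcmc is the maximum. v is a nonempty
  proper prefix of t iff v \<noteq> [], v \<noteq> t and (\<exists>w. v @ w = t).\<close>
definition mcmc_lengths :: "'a list set \<Rightarrow> nat set" where
  "mcmc_lengths M = {length t | s t. s \<in> M \<union> {[]} \<and> s @ t \<in> M \<and>
      (\<forall>v w. v @ w = t \<and> v \<noteq> [] \<and> v \<noteq> t \<longrightarrow> s @ v \<notin> M)}"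

definition is_N_mcmc :: "'a set \<Rightarrow> 'a list set \<Rightarrow> 'a list set \<Rightarrow> nat \<Rightarrow> bool" where
  "is_N_mcmc Euc L K n \<longleftrightarrow>
     n \<in> mcmc_lengths (Kmc Euc L K) \<and> (\<forall>m \<in> mcmc_lengths (Kmc Euc L K). m \<le> n)"

end

theory Submission
  imports Defs
begin

lemma pref_mono: "A \<subseteq> B \<Longrightarrow> pref A \<subseteq> pref B"
  unfolding pref_def by blast

lemma pref_pref: "pref (pref A) = pref A"
  unfolding pref_def by (auto; metis append.assoc append_Nil2)

lemma pref_self: "x \<in> A \<Longrightarrow> x \<in> pref A"
  unfolding pref_def by (auto intro: exI[of _ "[]"])

lemma pref_append: "x @ y \<in> pref A \<Longrightarrow> x \<in> pref A"
  unfolding pref_def by auto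

lemma pref_Un: "pref (A \<union> B) = pref A \<union> pref B"
  unfolding pref_def by blast

lemma supcon_sub: "supcon E L M \<subseteq> M"
  unfolding supcon_def by blast

lemma supcon_max: "M' \<subseteq> M \<Longrightarrow> controllable E L M' \<Longrightarrow> M' \<subseteq> supcon E L M"
  unfolding supcon_def by blast

lemma pref_Union: "pref (\<Union>F) = (\<Union>M\<in>F. pref M)"
  unfolding pref_def by blast

lemma supcon_ctrl: "controllable E L (supcon E L M)"
proof (unfold controllable_def, intro allI impI)
  fix s \<sigma> assume a: "s \<in> pref (supcon E L M) \<and> \<sigma> \<in> E \<and> s @ [\<sigma>] \<in> L"
  then obtain M' where M': "M' \<subseteq> M" "controllable E L M'" "s \<in> pref M'"
    unfolding supcon_def pref_Union by blast
  then have "s @ [\<sigma>] \<in> pref M'" using a unfolding controllable_def by blast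
  moreover have "pref M' \<subseteq> pref (supcon E L M)" using supcon_max[OF M'(1,2)] pref_mono by blast
  ultimately show "s @ [\<sigma>] \<in> pref (supcon E L M)" by blast
qed

lemma lemA:
  assumes ctrlS: "controllable E L S" and SK: "S \<subseteq> K"
    and hs: "s \<in> pref S \<or> s = []"
    and M'K: "M' \<subseteq> trunc (quot K s) (N - 1)"
    and M'c: "controllable E (trunc (quot L s) N) M'"
    and N1: "N \<ge> 1"
  shows "S \<union> (\<lambda>u. s @ u) ` M' \<subseteq> supcon E L K"
proof (rule supcon_max)
  show "S \<union> (\<lambda>u. s @ u) ` M' \<subseteq> K" using SK M'K unfolding trunc_def quot_def by auto
  show "controllable E L (S \<union> (\<lambda>u. s @ u) ` M')"
    unfolding controllable_def
  proof (intro allI impI)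
    fix y \<sigma> assume a: "y \<in> pref (S \<union> (\<lambda>u. s @ u) ` M') \<and> \<sigma> \<in> E \<and> y @ [\<sigma>] \<in> L"
    have inS: "y @ [\<sigma>] \<in> pref (S \<union> (\<lambda>u. s @ u) ` M')" if "y \<in> pref S"
    proof -
      have "y @ [\<sigma>] \<in> pref S" using ctrlS that a unfolding controllable_def by blast
      then show ?thesis unfolding pref_Un by blast
    qed
    have inM: "y @ [\<sigma>] \<in> pref (S \<union> (\<lambda>u. s @ u) ` M')" if "y = s @ us" "us @ z = m" "m \<in> M'" for us z m
    proof -
      have "length m \<le> N - 1" using M'K that(3) unfolding trunc_def by auto
      then have "length (us @ [\<sigma>]) \<le> N" using that(2) N1 by auto
      moreover have "us @ [\<sigma>] \<in> quot L s" using a that(1) unfolding quot_def by simp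
      moreover have "us \<in> pref M'" using that(2,3) unfolding pref_def by blast
      ultimately have "us @ [\<sigma>] \<in> pref M'" using M'c a unfolding controllable_def trunc_def by blast
      then obtain z' where "us @ [\<sigma>] @ z' \<in> M'" unfolding pref_def by auto
      then have "s @ us @ [\<sigma>] @ z' \<in> (\<lambda>u. s @ u) ` M'" by blast
      then show ?thesis using that(1) unfolding pref_def by auto
    qed
    from a obtain z where z: "y @ z \<in> S \<union> (\<lambda>u. s @ u) ` M'" unfolding pref_def by blast
    show "y @ [\<sigma>] \<in> pref (S \<union> (\<lambda>u. s @ u) ` M')"
    proof (cases "y @ z \<in> S")
      case True then show ?thesis using inS pref_def by blast
    next
      case False
      then obtain m where m: "m \<in> M'" "y @ z = s @ m" using z by blast
      then consider us where "y = s @ us" "us @ z = m" | us where "y @ us = s" "z = us @ m"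
        by (auto simp: append_eq_append_conv2)
      then show ?thesis
      proof cases
        case 1 then show ?thesis using inM m by blast
      next
        case 2
        show ?thesis
        proof (cases "s = []")
          case True then show ?thesis using 2 m inM[of "[]" z m] by simp
        next
          case False
          then have "s \<in> pref S" using hs by blast
          then have "y \<in> pref S" using 2 pref_append by metis
          then show ?thesis using inS by blast
        qed
      qed
    qed
  qed
qed

lemma lenC:
  assumes mc: "\<forall>m \<in> mcmc_lengths KM. m \<le> n"
    and xu: "x @ u \<in> pref KM"
    and nop: "\<forall>v r. v @ r = u \<and> v \<noteq> [] \<and> r \<noteq> [] \<longrightarrow> x @ v \<notin> KM"
  shows "length u \<le> n"
proof (cases "u = []")
  case True then show ?thesis by simp
next
  case False
  define P where "P = (\<lambda>k. k \<le> length x \<and> (take k x \<in> KM \<or> k = 0))"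
  define k0 where "k0 = (GREATEST k. P k)"
  have Pk0: "P k0" unfolding k0_def by (rule GreatestI_nat[of P 0 "length x"]) (auto simp: P_def)
  have k0max: "k \<le> k0" if "P k" for k unfolding k0_def
    by (rule Greatest_le_nat[of P k "length x"]) (use that in \<open>auto simp: P_def\<close>)
  obtain r where W: "x @ u @ r \<in> KM" using xu unfolding pref_def by auto
  define W where "W = x @ u @ r"
  define Q where "Q = (\<lambda>j. k0 < j \<and> take j W \<in> KM)"
  have QW: "Q (length W)" using W Pk0 False unfolding Q_def W_def P_def by (cases u) auto
  define j where "j = (LEAST j. Q j)"
  have Qj: "Q j" unfolding j_def by (rule LeastI[of Q, OF QW])
  have jmin: "\<not> Q i" if "i < j" for i using not_less_Least[of i Q] that j_def by blast
  have jW: "j \<le> length W" using Least_le[of Q, OF QW] j_def by simp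
  define t where "t = drop k0 (take j W)"
  have k0x: "k0 \<le> length x" using Pk0 P_def by simp
  have s0W: "take k0 W = take k0 x" using k0x unfolding W_def by simp
  have st: "take k0 x @ t = take j W"
  proof -
    have "take j W = take k0 (take j W) @ drop k0 (take j W)" by (rule append_take_drop_id[symmetric])
    also have "take k0 (take j W) = take k0 W" using Qj Q_def by (simp add: min_def)
    finally show ?thesis using s0W t_def by simp
  qed
  have tlen: "length t = j - k0" using jW Qj unfolding t_def Q_def by simp
  have "length t \<in> mcmc_lengths KM"
    unfolding mcmc_lengths_def
  proof (intro CollectI exI conjI)
    show "length t = length t" ..
    show "take k0 x \<in> KM \<union> {[]}" using Pk0 P_def by auto
    show "take k0 x @ t \<in> KM" using st Qj Q_def by simp
    show "\<forall>v w. v @ w = t \<and> v \<noteq> [] \<and> v \<noteq> t \<longrightarrow> take k0 x @ v \<notin> KM"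
    proof (intro allI impI)
      fix v w assume h: "v @ w = t \<and> v \<noteq> [] \<and> v \<noteq> t"
      have lv: "0 < length v" "length v < length t" using h by auto
      have "take (k0 + length v) W = take k0 x @ v"
      proof -
        have "take (k0 + length v) (take j W) = take (k0 + length v) W"
          using lv tlen by (simp add: min_def)
        moreover have "take (k0 + length v) (take k0 x @ t) = take k0 x @ v"
          using h k0x by auto
        ultimately show ?thesis using st by simp
      qed
      moreover have "\<not> Q (k0 + length v)" using jmin lv tlen by simp
      ultimately show "take k0 x @ v \<notin> KM" unfolding Q_def using lv by simp
    qed
  qed
  then have tn: "length t \<le> n" using mc by blast
  have jge: "length x + length u \<le> j"
  proof (rule ccontr)
    assume "\<not> ?thesis"
    then have jl: "j < length x + length u" by simp
    show False
    proof (cases "j \<le> length x")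
      case True
      then have "take j W = take j x" unfolding W_def by simp
      then have "P j" using Qj True unfolding Q_def P_def by simp
      then show False using k0max Qj Q_def by fastforce
    next
      case False
      define v where "v = take (j - length x) u"
      define r' where "r' = drop (j - length x) u"
      have "take j W = x @ v" using False jl unfolding W_def v_def by simp
      moreover have "v @ r' = u" "v \<noteq> []" "r' \<noteq> []" using False jl \<open>u \<noteq> []\<close> unfolding v_def r'_def by auto
      ultimately show False using nop Qj Q_def by metis
    qed
  qed
  show ?thesis using jge tn tlen k0x by simp
qed

theorem theorem12:
  fixes Euc :: "'a::finite set" and Lm K :: "'a list set" and N n :: nat
  defines "L \<equiv> pref Lm"
  assumes K_sub: "K \<subseteq> Lm"
    and K_closed: "K = pref K \<inter> Lm"
    and K_mc: "pref K = pref (Kmc Euc L K)"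
    and no_start_err: "f_cons Euc L K N [] \<noteq> {}"
    and N_def: "is_N_mcmc Euc L K n"
    and N_ge: "N \<ge> n + 1"
  shows "closed_loop L (gamma_cons Euc L K N) = pref (supcon Euc L K)"
proof -
  define S where "S = supcon Euc L K"
  define KM where "KM = Kmc Euc L K"
  have SK: "S \<subseteq> K" using supcon_sub S_def by blast
  have ctrlS: "controllable Euc L S" unfolding S_def by (rule supcon_ctrl)
  have prefSL: "pref S \<subseteq> L" using SK K_sub unfolding L_def by (meson pref_mono subset_trans)
  have prefSK: "pref S \<subseteq> pref KM" using SK K_mc pref_mono KM_def by blast
  have KMK: "KM \<subseteq> K" unfolding KM_def Kmc_def by blast
  have N1: "N \<ge> 1" using N_ge by simp
  have mc: "\<forall>m \<in> mcmc_lengths KM. m \<le> n" using N_def unfolding is_N_mcmc_def KM_def by blast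
  have KMS: "pref S \<inter> KM \<subseteq> S"
  proof -
    have "S \<union> (pref S \<inter> KM) \<subseteq> supcon Euc L K"
    proof (rule supcon_max)
      show "S \<union> (pref S \<inter> KM) \<subseteq> K" using SK KMK by blast
      have "pref (pref S \<inter> KM) \<subseteq> pref S" using pref_mono[of "pref S \<inter> KM" "pref S"] pref_pref by blast
      then have "pref (S \<union> (pref S \<inter> KM)) = pref S" unfolding pref_Un by blast
      then show "controllable Euc L (S \<union> (pref S \<inter> KM))" using ctrlS unfolding controllable_def by simp
    qed
    thus ?thesis using S_def by blast
  qed
  have dir1: "x \<in> pref S" if "x \<in> closed_loop L (gamma_cons Euc L K N)" for x
    using that
  proof (induction rule: closed_loop.induct)
    case Nil
    from no_start_err obtain m where "m \<in> f_cons Euc L K N []" by blast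
    then obtain M' where M': "m \<in> M'" "M' \<subseteq> trunc (quot K []) (N-1)" "controllable Euc (trunc (quot L []) N) M'"
      unfolding f_cons_def supcon_def by auto
    have "S \<union> (\<lambda>u. [] @ u) ` M' \<subseteq> supcon Euc L K"
      by (rule lemA[OF ctrlS SK _ M'(2) M'(3) N1]) simp
    then have "m \<in> S" using M'(1) S_def by auto
    then show ?case unfolding pref_def by auto
  next
    case (snoc s \<sigma>)
    from snoc.hyps(3) have "[\<sigma>] \<in> pref (f_cons Euc L K N s) \<or> \<sigma> \<in> Euc" unfolding gamma_cons_def by auto
    then show ?case
    proof
      assume "[\<sigma>] \<in> pref (f_cons Euc L K N s)"
      then obtain z where "[\<sigma>] @ z \<in> f_cons Euc L K N s" unfolding pref_def by auto
      then obtain M' where M': "[\<sigma>] @ z \<in> M'" "M' \<subseteq> trunc (quot K s) (N-1)" "controllable Euc (trunc (quot L s) N) M'"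
        unfolding f_cons_def supcon_def by auto
      have "S \<union> (\<lambda>u. s @ u) ` M' \<subseteq> supcon Euc L K"
        by (rule lemA[OF ctrlS SK _ M'(2) M'(3) N1]) (use snoc.IH in simp)
      then have "s @ [\<sigma>] @ z \<in> S" using M'(1) S_def by auto
      then show ?thesis unfolding pref_def by auto
    next
      assume "\<sigma> \<in> Euc"
      then show ?thesis using ctrlS snoc.IH snoc.hyps(2) unfolding controllable_def by simp
    qed
  qed
  have key: "[\<sigma>] \<in> pref (f_cons Euc L K N x)" if xs: "x @ [\<sigma>] \<in> pref S" for x \<sigma>
  proof -
    define NP where "NP = (\<lambda>u. \<forall>v r. v @ r = u \<and> v \<noteq> [] \<and> r \<noteq> [] \<longrightarrow> x @ v \<notin> KM)"
    define M' where "M' = {u. NP u \<and> x @ u \<in> S}"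
    have M'iff: "u \<in> M' \<longleftrightarrow> NP u \<and> x @ u \<in> S" for u unfolding M'_def by simp
    have ext: "a \<in> pref M'" if "a \<noteq> []" "NP a" "x @ a @ w \<in> S" for a w
      using that
    proof (induction w arbitrary: a)
      case Nil
      then have "a \<in> M'" using M'iff by simp
      then show ?case by (rule pref_self)
    next
      case (Cons c w)
      have xa: "x @ a \<in> pref S" using pref_append[of "x @ a" "c # w" S] pref_self[OF Cons.prems(3)] by simp
      show ?case
      proof (cases "x @ a \<in> KM")
        case True
        then have "x @ a \<in> S" using KMS xa by blast
        then have "a \<in> M'" using M'iff Cons.prems(2) by simp
        then show ?thesis by (rule pref_self)
      next
        case False
        have "NP (a @ [c])" unfolding NP_def
        proof (intro allI impI)
          fix v r assume h: "v @ r = a @ [c] \<and> v \<noteq> [] \<and> r \<noteq> []"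
          then have "v @ butlast r = a" by (metis butlast_append butlast_snoc)
          then show "x @ v \<notin> KM" using False Cons.prems(2) h unfolding NP_def by (cases "butlast r = []") auto
        qed
        moreover have "x @ (a @ [c]) @ w \<in> S" using Cons.prems(3) by simp
        ultimately have "a @ [c] \<in> pref M'" using Cons.IH[of "a @ [c]"] by simp
        then show ?thesis by (rule pref_append)
      qed
    qed
    have M'K: "M' \<subseteq> trunc (quot K x) (N - 1)"
    proof
      fix u assume u: "u \<in> M'"
      then have xuS: "x @ u \<in> S" and NPu: "NP u" using M'iff by auto
      then have "x @ u \<in> K" using SK by blast
      moreover have "x @ u \<in> pref KM" using prefSK pref_self[OF xuS] by blast
      then have "length u \<le> n"
        using lenC[OF mc, of x u] NPu unfolding NP_def by blast
      ultimately show "u \<in> trunc (quot K x) (N - 1)" unfolding trunc_def quot_def using N_ge by simp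
    qed
    have M'c: "controllable Euc (trunc (quot L x) N) M'"
      unfolding controllable_def
    proof (intro allI impI)
      fix u \<sigma>' assume h: "u \<in> pref M' \<and> \<sigma>' \<in> Euc \<and> u @ [\<sigma>'] \<in> trunc (quot L x) N"
      then obtain z m where zm: "u @ z = m" "m \<in> M'" unfolding pref_def by blast
      have L1: "x @ u @ [\<sigma>'] \<in> L" using h unfolding trunc_def quot_def by simp
      have nKM: "x @ u \<notin> KM"
      proof
        assume "x @ u \<in> KM"
        then have "x @ u \<in> Lc Euc L" unfolding KM_def Kmc_def by blast
        then show False using L1 h unfolding Lc_def by auto
      qed
      have "x @ m \<in> S" using zm(2) M'iff by simp
      then have "x @ u \<in> pref S" using zm(1) pref_append[of "x @ u" z S] pref_self by (metis append.assoc)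
      then have "x @ u @ [\<sigma>'] \<in> pref S" using ctrlS h L1 unfolding controllable_def by (metis append.assoc)
      then obtain w where w: "x @ (u @ [\<sigma>']) @ w \<in> S" unfolding pref_def by auto
      have mT: "NP m" using zm M'iff by simp
      have "NP (u @ [\<sigma>'])" unfolding NP_def
      proof (intro allI impI)
        fix v r assume h2: "v @ r = u @ [\<sigma>'] \<and> v \<noteq> [] \<and> r \<noteq> []"
        then have vb: "v @ butlast r = u" by (metis butlast_append butlast_snoc)
        show "x @ v \<notin> KM"
        proof (cases "butlast r = []")
          case True then show ?thesis using vb nKM by simp
        next
          case False
          have "v @ (butlast r @ z) = m" using vb zm by auto
          then show ?thesis using mT h2 False unfolding NP_def by blast
        qed
      qed
      then show "u @ [\<sigma>'] \<in> pref M'" using ext[of "u @ [\<sigma>']" w] w by simp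
    qed
    have "[\<sigma>] \<in> pref M'"
    proof -
      obtain w where "x @ [\<sigma>] @ w \<in> S" using xs unfolding pref_def by auto
      moreover have "NP [\<sigma>]" unfolding NP_def by (auto simp: append_eq_Cons_conv)
      ultimately show ?thesis using ext[of "[\<sigma>]" w] by simp
    qed
    moreover have "M' \<subseteq> f_cons Euc L K N x" unfolding f_cons_def using M'K M'c by (rule supcon_max)
    ultimately show ?thesis using pref_mono by blast
  qed
  have dir2: "x \<in> closed_loop L (gamma_cons Euc L K N)" if "x \<in> pref S" for x
    using that
  proof (induction x rule: rev_induct)
    case Nil show ?case by (rule closed_loop.Nil)
  next
    case (snoc \<sigma> x)
    have xS: "x \<in> pref S" using snoc.prems pref_append by blast
    have "[\<sigma>] \<in> pref (f_cons Euc L K N x)" using key[OF snoc.prems] .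
    then show ?case using closed_loop.snoc[OF snoc.IH[OF xS]] snoc.prems prefSL
      unfolding gamma_cons_def by blast
  qed
  show ?thesis using dir1 dir2 S_def by blast
qed

end
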